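(* Let $\chi,m\geq 2$ be integers and write $R=\vec{R}(\chi)$. Then there exists an integer $M_0=M_0(\chi,m)$ such that the following holds for every $M\geq M_0$. Let the edges of $K=K^{(3)}_{RM}$ be coloured red/blue, and suppose $V(K)$ is partitioned into $R$ sets $V_1,\dots,V_R$ each inducing a red copy of $K^{(3)}_M$. Then at least one of the following holds: (a) for any collection of subsets $W_i\subseteq V_i$ with $|W_i|\geq M/2$ for all $i\in[R]$, there is a red tight path of length two in $K[\bigcup_{i\in[R]}W_i]$ connecting $W_j$ and $W_{j'}$ for some distinct $j,j'\in[R]$; (b) $K$ contains a blue copy of $H(TT_\chi,m)$.
   Context: $TT_\chi$ denotes the transitive tournament on $[\chi]$; $\vec{R}(\ell)$ is the least $N$ such that every tournament on at least $N$ vertices contains a copy of $TT_\ell$. For a tournament $T_\chi$ on $[\chi]$, $H(T_\chi,m)$ is the 3-uniform hypergraph on disjoint sets $A_1,\dots,A_\chi$ of size $m$ with edges $\{xyz: x,y\in A_i,\ z\in A_j,\ (i,j)\text{ an arc of }T_\chi\}$. A 3-uniform tight path of length two is a sequence of distinct vertices $v_1v_2v_3v_4$ with edges $v_1v_2v_3$ and $v_2v_3v_4$; its ends are $\{v_1,v_2\}$ and $\{v_3,v_4\}$, and it connects $S,S'$ if one end lies in $S$ and the other in $S'$. *)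

theory Defs
  imports Main
begin

definition tournament_on :: "'a set \<Rightarrow> ('a \<Rightarrow> 'a \<Rightarrow> bool) \<Rightarrow> bool" where
  "tournament_on S T \<longleftrightarrow>
     (\<forall>x\<in>S. \<not> T x x) \<and>
     (\<forall>x\<in>S. \<forall>y\<in>S. x \<noteq> y \<longrightarrow> (T x y \<longleftrightarrow> \<not> T y x))"

definition contains_TT :: "'a set \<Rightarrow> ('a \<Rightarrow> 'a \<Rightarrow> bool) \<Rightarrow> nat \<Rightarrow> bool" where
  "contains_TT S T l \<longleftrightarrow>
     (\<exists>g. inj_on g {1..l} \<and> g ` {1..l} \<subseteq> S \<and>
          (\<forall>i\<in>{1..l}. \<forall>j\<in>{1..l}. i < j \<longrightarrow> T (g i) (g j)))"

definition dir_ramsey :: "nat \<Rightarrow> nat" where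
  "dir_ramsey l = (LEAST N. \<forall>(S::nat set) T. finite S \<longrightarrow> card S \<ge> N \<longrightarrow>
       tournament_on S T \<longrightarrow> contains_TT S T l)"

text \<open>A red tight path of length two v1 v2 v3 v4 inside U (red edges are the triples
on which col is True), with end {v1,v2} in A and end {v3,v4} in B.\<close>
definition red_tight_path2 :: "('a set \<Rightarrow> bool) \<Rightarrow> 'a set \<Rightarrow> 'a set \<Rightarrow> 'a set \<Rightarrow> bool" where
  "red_tight_path2 col U A B \<longleftrightarrow>
     (\<exists>v1 v2 v3 v4. distinct [v1, v2, v3, v4] \<and> {v1, v2, v3, v4} \<subseteq> U \<and>
        col {v1, v2, v3} \<and> col {v2, v3, v4} \<and> {v1, v2} \<subseteq> A \<and> {v3, v4} \<subseteq> B)"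

text \<open>K (complete 3-graph on V, colouring col, False = blue) contains a blue copy of
H(TT_chi, m): vertex (i,a) of H lies in A_i, i \<in> [chi], a \<in> [m]; edges
{(i,a),(i,b),(j,c)} with a \<noteq> b and (i,j) an arc of TT_chi, i.e. i < j.\<close>
definition blue_H_TT :: "'a set \<Rightarrow> ('a set \<Rightarrow> bool) \<Rightarrow> nat \<Rightarrow> nat \<Rightarrow> bool" where
  "blue_H_TT V col chi m \<longleftrightarrow>
     (\<exists>f :: nat \<times> nat \<Rightarrow> 'a.
        inj_on f ({1..chi} \<times> {1..m}) \<and> f ` ({1..chi} \<times> {1..m}) \<subseteq> V \<and>
        (\<forall>i\<in>{1..chi}. \<forall>j\<in>{1..chi}. \<forall>a\<in>{1..m}. \<forall>b\<in>{1..m}. \<forall>c\<in>{1..m}.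
           i < j \<longrightarrow> a \<noteq> b \<longrightarrow> \<not> col {f (i, a), f (i, b), f (j, c)}))"

end

theory Submission
  imports Defs
begin


lemma seq_select:
  fixes c :: "'a \<Rightarrow> 'b \<Rightarrow> bool"
  shows "finite X \<Longrightarrow> finite Y \<Longrightarrow> card X \<ge> k \<Longrightarrow> card Y \<ge> 2^k * n \<Longrightarrow>
    \<exists>S Y'. S \<subseteq> X \<and> card S = k \<and> Y' \<subseteq> Y \<and> card Y' \<ge> n \<and>
       (\<forall>x\<in>S. \<forall>y\<in>Y'. \<forall>y'\<in>Y'. c x y = c x y')"
proof (induction k arbitrary: X Y)
  case 0
  then show ?case by (intro exI[of _ "{}"] exI[of _ Y]) auto
next
  case (Suc k)
  then have "X \<noteq> {}" by auto
  then obtain x0 where x0: "x0 \<in> X" by blast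
  define Y1 where "Y1 = {y\<in>Y. c x0 y}"
  define Y2 where "Y2 = {y\<in>Y. \<not> c x0 y}"
  have fin: "finite Y1" "finite Y2" using Suc.prems by (auto simp: Y1_def Y2_def)
  have "Y = Y1 \<union> Y2" "Y1 \<inter> Y2 = {}" by (auto simp: Y1_def Y2_def)
  hence "card Y = card Y1 + card Y2" using fin card_Un_disjoint by simp
  moreover have "2 * (2^k * n) \<le> card Y" using Suc.prems(4) by (simp add: mult.assoc)
  ultimately have "card Y1 \<ge> 2^k * n \<or> card Y2 \<ge> 2^k * n" by linarith
  hence "\<exists>Z. Z \<subseteq> Y \<and> finite Z \<and> card Z \<ge> 2^k * n \<and> (\<forall>y\<in>Z. \<forall>y'\<in>Z. c x0 y = c x0 y')"
  proof
    assume "card Y1 \<ge> 2^k * n" thus ?thesis using fin by (intro exI[of _ Y1]) (auto simp: Y1_def)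
  next
    assume "card Y2 \<ge> 2^k * n" thus ?thesis using fin by (intro exI[of _ Y2]) (auto simp: Y2_def)
  qed
  then obtain Z where Z: "Z \<subseteq> Y" "finite Z" "card Z \<ge> 2^k * n" "\<forall>y\<in>Z. \<forall>y'\<in>Z. c x0 y = c x0 y'"
    by blast
  have "card (X - {x0}) \<ge> k" using Suc.prems(3) x0 Suc.prems(1) by auto
  from Suc.IH[OF _ Z(2) this Z(3)] Suc.prems(1)
  obtain S Y' where S: "S \<subseteq> X - {x0}" "card S = k" "Y' \<subseteq> Z" "card Y' \<ge> n"
     "\<forall>x\<in>S. \<forall>y\<in>Y'. \<forall>y'\<in>Y'. c x y = c x y'" by auto
  have "finite S" using S(1) Suc.prems(1) finite_subset by blast
  moreover have "x0 \<notin> S" using S(1) by auto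
  ultimately have "card (insert x0 S) = Suc k" using S by auto
  moreover have "insert x0 S \<subseteq> X" using S(1) x0 by blast
  moreover have "Y' \<subseteq> Y" using S(3) Z(1) by blast
  moreover have "\<forall>x\<in>insert x0 S. \<forall>y\<in>Y'. \<forall>y'\<in>Y'. c x y = c x y'"
    using S(3,5) Z(4) by blast
  ultimately show ?case using S(4) by blast
qed

lemma bip_ramsey:
  "\<exists>N. \<forall>(X::'a set) (Y::'b set) (c::'a \<Rightarrow> 'b \<Rightarrow> bool). finite X \<longrightarrow> finite Y \<longrightarrow> card X \<ge> N \<longrightarrow> card Y \<ge> N \<longrightarrow>
     (\<exists>A B \<beta>. A \<subseteq> X \<and> B \<subseteq> Y \<and> card A = n \<and> card B = n \<and> (\<forall>x\<in>A. \<forall>y\<in>B. c x y = \<beta>))"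
proof (intro exI[of _ "2*n + 2^(2*n)*n"] allI impI)
  fix X :: "'a set" and Y :: "'b set" and c :: "'a \<Rightarrow> 'b \<Rightarrow> bool"
  assume fX: "finite X" and fY: "finite Y" and cX: "card X \<ge> 2*n + 2^(2*n)*n" and cY: "card Y \<ge> 2*n + 2^(2*n)*n"
  obtain S Y' where S: "S \<subseteq> X" "card S = 2*n" "Y' \<subseteq> Y" "card Y' \<ge> n"
       "\<forall>x\<in>S. \<forall>y\<in>Y'. \<forall>y'\<in>Y'. c x y = c x y'"
    using seq_select[OF fX fY, of "2*n" n c] cX cY by auto
  have fS: "finite S" using S(1) fX finite_subset by blast
  obtain B where B: "B \<subseteq> Y'" "card B = n" using obtain_subset_with_card_n[OF S(4)] by blast
  define S1 where "S1 = {x\<in>S. \<forall>y\<in>Y'. c x y}"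
  define S2 where "S2 = {x\<in>S. \<forall>y\<in>Y'. \<not> c x y}"
  have "S = S1 \<union> S2"
  proof -
    have "x \<in> S1 \<union> S2" if "x \<in> S" for x
    proof (cases "\<forall>y\<in>Y'. c x y")
      case True thus ?thesis using that by (simp add: S1_def)
    next
      case False
      then obtain y0 where y0: "y0 \<in> Y'" "\<not> c x y0" by blast
      have "\<forall>y\<in>Y'. \<not> c x y" using S(5) that y0 by blast
      thus ?thesis using that by (simp add: S2_def)
    qed
    thus ?thesis by (auto simp: S1_def S2_def)
  qed
  hence "card S \<le> card S1 + card S2" using card_Un_le[of S1 S2] by simp
  hence "card S1 \<ge> n \<or> card S2 \<ge> n" using S(2) by auto
  thus "\<exists>A B \<beta>. A \<subseteq> X \<and> B \<subseteq> Y \<and> card A = n \<and> card B = n \<and> (\<forall>x\<in>A. \<forall>y\<in>B. c x y = \<beta>)"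
  proof
    assume "card S1 \<ge> n"
    then obtain A where "A \<subseteq> S1" "card A = n" using obtain_subset_with_card_n[of n S1] by blast
    thus ?thesis using B S by (intro exI[of _ A] exI[of _ B] exI[of _ True]) (auto simp: S1_def)
  next
    assume "card S2 \<ge> n"
    then obtain A where "A \<subseteq> S2" "card A = n" using obtain_subset_with_card_n[of n S2] by blast
    thus ?thesis using B S by (intro exI[of _ A] exI[of _ B] exI[of _ False]) (auto simp: S2_def)
  qed
qed

lemma multi_ramsey:
  fixes Q :: "(nat \<times> nat) set"
  assumes "finite Q"
  shows "Q \<subseteq> {(i,j). i \<in> I \<and> j \<in> I \<and> i \<noteq> j} \<Longrightarrow> \<forall>n. \<exists>N. \<forall>(X::nat \<Rightarrow> 'a set) (c::nat \<Rightarrow> nat \<Rightarrow> 'a \<Rightarrow> 'a \<Rightarrow> bool).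
     (\<forall>i\<in>I. finite (X i) \<and> card (X i) \<ge> N) \<longrightarrow>
     (\<exists>Y b. (\<forall>i\<in>I. Y i \<subseteq> X i \<and> card (Y i) = n) \<and>
         (\<forall>(i,j)\<in>Q. \<forall>x\<in>Y i. \<forall>y\<in>Y j. c i j x y = b i j))"
  using assms
proof (induction Q rule: finite_induct)
  case empty
  show ?case
  proof (intro allI impI)
    fix n show "\<exists>N. \<forall>(X::nat \<Rightarrow> 'a set) (c::nat \<Rightarrow> nat \<Rightarrow> 'a \<Rightarrow> 'a \<Rightarrow> bool).
     (\<forall>i\<in>I. finite (X i) \<and> card (X i) \<ge> N) \<longrightarrow>
     (\<exists>Y b. (\<forall>i\<in>I. Y i \<subseteq> X i \<and> card (Y i) = n) \<and>
         (\<forall>(i,j)\<in>{}. \<forall>x\<in>Y i. \<forall>y\<in>Y j. c i j x y = b i j))"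
    proof (intro exI[of _ n] allI impI)
    fix X :: "nat \<Rightarrow> 'a set" and c :: "nat \<Rightarrow> nat \<Rightarrow> 'a \<Rightarrow> 'a \<Rightarrow> bool"
    assume h: "\<forall>i\<in>I. finite (X i) \<and> card (X i) \<ge> n"
    have "\<forall>i\<in>I. \<exists>Z. Z \<subseteq> X i \<and> card Z = n"
    proof
      fix i assume "i \<in> I"
      hence "n \<le> card (X i)" using h by blast
      thus "\<exists>Z. Z \<subseteq> X i \<and> card Z = n" using obtain_subset_with_card_n[of n "X i"] by blast
    qed
    from bchoice[OF this] obtain Y where "\<forall>i\<in>I. Y i \<subseteq> X i \<and> card (Y i) = n" by blast
    thus "\<exists>Y b. (\<forall>i\<in>I. Y i \<subseteq> X i \<and> card (Y i) = n) \<and>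
         (\<forall>(i,j)\<in>{}. \<forall>x\<in>Y i. \<forall>y\<in>Y j. c i j x y = b i j)" by auto
  qed
  qed
next
  case (insert q Q)
  obtain i0 j0 where q: "q = (i0, j0)" by fastforce
  have ij: "i0 \<in> I" "j0 \<in> I" "i0 \<noteq> j0" using insert.prems q by auto
  have IH: "\<forall>n. \<exists>N. \<forall>(X::nat \<Rightarrow> 'a set) (c::nat \<Rightarrow> nat \<Rightarrow> 'a \<Rightarrow> 'a \<Rightarrow> bool).
     (\<forall>i\<in>I. finite (X i) \<and> card (X i) \<ge> N) \<longrightarrow>
     (\<exists>Y b. (\<forall>i\<in>I. Y i \<subseteq> X i \<and> card (Y i) = n) \<and>
         (\<forall>(i,j)\<in>Q. \<forall>x\<in>Y i. \<forall>y\<in>Y j. c i j x y = b i j))"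
  proof -
    have "Q \<subseteq> {(i,j). i \<in> I \<and> j \<in> I \<and> i \<noteq> j}" using insert.prems by blast
    thus ?thesis by (rule insert.IH)
  qed
  show ?case
  proof
    fix n
    obtain B where B: "\<forall>(X::'a set) (Y::'a set) (c::'a \<Rightarrow> 'a \<Rightarrow> bool). finite X \<longrightarrow> finite Y \<longrightarrow> card X \<ge> B \<longrightarrow> card Y \<ge> B \<longrightarrow>
     (\<exists>A B \<beta>. A \<subseteq> X \<and> B \<subseteq> Y \<and> card A = n \<and> card B = n \<and> (\<forall>x\<in>A. \<forall>y\<in>B. c x y = \<beta>))"
      using bip_ramsey[of n] by (elim exE)
    obtain N where N: "\<forall>(X::nat \<Rightarrow> 'a set) (c::nat \<Rightarrow> nat \<Rightarrow> 'a \<Rightarrow> 'a \<Rightarrow> bool).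
     (\<forall>i\<in>I. finite (X i) \<and> card (X i) \<ge> N) \<longrightarrow>
     (\<exists>Y b. (\<forall>i\<in>I. Y i \<subseteq> X i \<and> card (Y i) = B) \<and>
         (\<forall>(i,j)\<in>Q. \<forall>x\<in>Y i. \<forall>y\<in>Y j. c i j x y = b i j))" using IH[THEN spec[of _ B]] by (elim exE)
    show "\<exists>N. \<forall>(X::nat \<Rightarrow> 'a set) (c::nat \<Rightarrow> nat \<Rightarrow> 'a \<Rightarrow> 'a \<Rightarrow> bool).
     (\<forall>i\<in>I. finite (X i) \<and> card (X i) \<ge> N) \<longrightarrow>
     (\<exists>Y b. (\<forall>i\<in>I. Y i \<subseteq> X i \<and> card (Y i) = n) \<and>
         (\<forall>(i,j)\<in>insert q Q. \<forall>x\<in>Y i. \<forall>y\<in>Y j. c i j x y = b i j))"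
    proof (intro exI[of _ N] allI impI)
      fix X :: "nat \<Rightarrow> 'a set" and c :: "nat \<Rightarrow> nat \<Rightarrow> 'a \<Rightarrow> 'a \<Rightarrow> bool"
      assume h: "\<forall>i\<in>I. finite (X i) \<and> card (X i) \<ge> N"
      obtain Y' b' where Y': "\<forall>i\<in>I. Y' i \<subseteq> X i \<and> card (Y' i) = B"
        "\<forall>(i,j)\<in>Q. \<forall>x\<in>Y' i. \<forall>y\<in>Y' j. c i j x y = b' i j"
        using N[THEN spec[of _ X], THEN spec[of _ c], THEN mp, OF h] by (elim exE conjE)
      have fY': "\<forall>i\<in>I. finite (Y' i)" using Y'(1) h finite_subset by blast
      obtain A0 B0 \<beta> where AB: "A0 \<subseteq> Y' i0" "B0 \<subseteq> Y' j0" "card A0 = n" "card B0 = n"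
         "\<forall>x\<in>A0. \<forall>y\<in>B0. c i0 j0 x y = \<beta>"
      proof -
        have "finite (Y' i0)" "finite (Y' j0)" "card (Y' i0) \<ge> B" "card (Y' j0) \<ge> B"
          using fY' Y'(1) ij by auto
        from B[rule_format, of "Y' i0" "Y' j0" "c i0 j0", OF this] show ?thesis using that by blast
      qed
      have "card A0 \<le> card (Y' i0)" using card_mono[OF _ AB(1)] fY' ij by blast
      hence nB: "n \<le> B" using AB(3) Y'(1) ij by simp
      have "\<forall>i\<in>I. \<exists>Z. Z \<subseteq> Y' i \<and> card Z = n"
      proof
        fix i assume "i \<in> I"
        hence "n \<le> card (Y' i)" using Y'(1) nB by simp
        thus "\<exists>Z. Z \<subseteq> Y' i \<and> card Z = n" using obtain_subset_with_card_n[of n "Y' i"] by blast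
      qed
      from bchoice[OF this] obtain Z where Z: "\<forall>i\<in>I. Z i \<subseteq> Y' i \<and> card (Z i) = n" by blast
      define Y where "Y i = (if i = i0 then A0 else if i = j0 then B0 else Z i)" for i
      define b where "b i j = (if (i, j) = (i0, j0) then \<beta> else b' i j)" for i j
      have Ysub: "\<forall>i\<in>I. Y i \<subseteq> Y' i" using Z AB by (auto simp: Y_def)
      have "\<forall>i\<in>I. Y i \<subseteq> X i" using Ysub Y'(1) by blast
      moreover have "\<forall>i\<in>I. card (Y i) = n" using Z AB by (simp add: Y_def)
      ultimately have 1: "\<forall>i\<in>I. Y i \<subseteq> X i \<and> card (Y i) = n" by blast
      have 2: "\<forall>(i,j)\<in>insert q Q. \<forall>x\<in>Y i. \<forall>y\<in>Y j. c i j x y = b i j"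
      proof (intro ballI, clarify)
        fix i j x y assume ijQ: "(i, j) \<in> insert q Q" and x: "x \<in> Y i" and y: "y \<in> Y j"
        show "c i j x y = b i j"
        proof (cases "(i, j) = (i0, j0)")
          case True
          thus ?thesis using x y AB ij by (auto simp: Y_def b_def)
        next
          case False
          hence "(i, j) \<in> Q" using ijQ q by auto
          moreover have "i \<in> I" "j \<in> I" using calculation insert.prems by auto
          have xy: "x \<in> Y' i" "y \<in> Y' j" using Ysub x y \<open>i \<in> I\<close> \<open>j \<in> I\<close> by auto
          from Y'(2) \<open>(i, j) \<in> Q\<close> have "\<forall>x\<in>Y' i. \<forall>y\<in>Y' j. c i j x y = b' i j" by blast
          moreover have "b i j = b' i j" using False unfolding b_def by auto
          ultimately show ?thesis using xy by simp
        qed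
      qed
      show "\<exists>Y b. (\<forall>i\<in>I. Y i \<subseteq> X i \<and> card (Y i) = n) \<and>
         (\<forall>(i,j)\<in>insert q Q. \<forall>x\<in>Y i. \<forall>y\<in>Y j. c i j x y = b i j)" using 1 2 by blast
    qed
  qed
qed



lemma TT_extend_front:
  assumes g: "inj_on g {1..l}" "g ` {1..l} \<subseteq> Out"
      "\<forall>i\<in>{1..l}. \<forall>j\<in>{1..l}. i < j \<longrightarrow> T (g i) (g j)"
    and v: "v \<in> S" "v \<notin> Out" "Out \<subseteq> S" "\<forall>u\<in>Out. T v u"
  shows "contains_TT S T (Suc l)"
proof -
  define g' where "g' i = (if i = 1 then v else g (i - 1))" for i :: nat
  have gO: "i \<in> {1..l} \<Longrightarrow> g i \<in> Out" for i using g(2) by blast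
  have "inj_on g' {1..Suc l}"
  proof (rule inj_onI)
    fix i j :: nat assume i: "i \<in> {1..Suc l}" and j: "j \<in> {1..Suc l}" and e: "g' i = g' j"
    show "i = j"
    proof (cases "i = 1")
      case True
      show ?thesis
      proof (rule ccontr)
        assume "i \<noteq> j"
        hence "j - 1 \<in> {1..l}" using True j by auto
        hence "g (j - 1) \<in> Out" by (rule gO)
        moreover have "g (j - 1) = v" using e True \<open>i \<noteq> j\<close> by (simp add: g'_def)
        ultimately show False using v(2) by simp
      qed
    next
      case False
      show ?thesis
      proof (cases "j = 1")
        case True
        have "i - 1 \<in> {1..l}" using False i by auto
        hence "g (i - 1) \<in> Out" by (rule gO)
        moreover have "g (i - 1) = v" using e True False by (simp add: g'_def)
        ultimately show ?thesis using v(2) by simp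
      next
        case jF: False
        have "i - 1 \<in> {1..l}" "j - 1 \<in> {1..l}" using False jF i j by auto
        moreover have "g (i - 1) = g (j - 1)" using e False jF by (simp add: g'_def)
        ultimately have "i - 1 = j - 1" using inj_onD[OF g(1)] by blast
        thus ?thesis using False jF i j by auto
      qed
    qed
  qed
  moreover have "g' ` {1..Suc l} \<subseteq> S"
  proof
    fix x assume "x \<in> g' ` {1..Suc l}"
    then obtain i where i: "i \<in> {1..Suc l}" "x = g' i" by blast
    show "x \<in> S"
    proof (cases "i = 1")
      case True thus ?thesis using i v by (simp add: g'_def)
    next
      case False
      hence "i - 1 \<in> {1..l}" using i by auto
      hence "g (i - 1) \<in> Out" by (rule gO)
      thus ?thesis using i False v(3) by (auto simp: g'_def)
    qed
  qed
  moreover have "\<forall>i\<in>{1..Suc l}. \<forall>j\<in>{1..Suc l}. i < j \<longrightarrow> T (g' i) (g' j)"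
  proof (intro ballI impI)
    fix i j assume i: "i \<in> {1..Suc l}" and j: "j \<in> {1..Suc l}" and ij: "i < j"
    have j1: "j - 1 \<in> {1..l}" "j \<noteq> 1" using ij i j by auto
    show "T (g' i) (g' j)"
    proof (cases "i = 1")
      case True
      have "g (j - 1) \<in> Out" using j1(1) by (rule gO)
      thus ?thesis using True j1 v(4) by (simp add: g'_def)
    next
      case False
      have "i - 1 \<in> {1..l}" "i - 1 < j - 1" using False i ij by auto
      hence "T (g (i - 1)) (g (j - 1))" using g(3) j1 by blast
      thus ?thesis using False j1 by (simp add: g'_def)
    qed
  qed
  ultimately show ?thesis unfolding contains_TT_def by blast
qed

lemma TT_extend_back:
  assumes g: "inj_on g {1..l}" "g ` {1..l} \<subseteq> In"
      "\<forall>i\<in>{1..l}. \<forall>j\<in>{1..l}. i < j \<longrightarrow> T (g i) (g j)"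
    and v: "v \<in> S" "v \<notin> In" "In \<subseteq> S" "\<forall>u\<in>In. T u v"
  shows "contains_TT S T (Suc l)"
proof -
  define g' where "g' i = (if i = Suc l then v else g i)" for i :: nat
  have gI: "i \<in> {1..l} \<Longrightarrow> g i \<in> In" for i using g(2) by blast
  have "inj_on g' {1..Suc l}"
  proof (rule inj_onI)
    fix i j :: nat assume i: "i \<in> {1..Suc l}" and j: "j \<in> {1..Suc l}" and e: "g' i = g' j"
    show "i = j"
    proof (cases "i = Suc l")
      case True
      show ?thesis
      proof (rule ccontr)
        assume "i \<noteq> j"
        hence "j \<in> {1..l}" using True j by auto
        hence "g j \<in> In" by (rule gI)
        moreover have "g j = v" using e True \<open>i \<noteq> j\<close> by (simp add: g'_def)
        ultimately show False using v(2) by simp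
      qed
    next
      case False
      show ?thesis
      proof (cases "j = Suc l")
        case True
        have "i \<in> {1..l}" using False i by auto
        hence "g i \<in> In" by (rule gI)
        moreover have "g i = v" using e True False by (simp add: g'_def)
        ultimately show ?thesis using v(2) by simp
      next
        case jF: False
        have "i \<in> {1..l}" "j \<in> {1..l}" using False jF i j by auto
        moreover have "g i = g j" using e False jF by (simp add: g'_def)
        ultimately show ?thesis using inj_onD[OF g(1)] by blast
      qed
    qed
  qed
  moreover have "g' ` {1..Suc l} \<subseteq> S"
  proof
    fix x assume "x \<in> g' ` {1..Suc l}"
    then obtain i where i: "i \<in> {1..Suc l}" "x = g' i" by blast
    show "x \<in> S"
    proof (cases "i = Suc l")
      case True thus ?thesis using i v by (simp add: g'_def)
    next
      case False
      hence "i \<in> {1..l}" using i by auto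
      hence "g i \<in> In" by (rule gI)
      thus ?thesis using i False v(3) by (auto simp: g'_def)
    qed
  qed
  moreover have "\<forall>i\<in>{1..Suc l}. \<forall>j\<in>{1..Suc l}. i < j \<longrightarrow> T (g' i) (g' j)"
  proof (intro ballI impI)
    fix i j assume i: "i \<in> {1..Suc l}" and j: "j \<in> {1..Suc l}" and ij: "i < j"
    have i1: "i \<in> {1..l}" "i \<noteq> Suc l" using ij i j by auto
    show "T (g' i) (g' j)"
    proof (cases "j = Suc l")
      case True
      have "g i \<in> In" using i1(1) by (rule gI)
      thus ?thesis using True i1 v(4) by (simp add: g'_def)
    next
      case False
      have "j \<in> {1..l}" using False j by auto
      hence "T (g i) (g j)" using g(3) i1 ij by blast
      thus ?thesis using False i1 by (simp add: g'_def)
    qed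
  qed
  ultimately show ?thesis unfolding contains_TT_def by blast
qed

lemma tourn_ramsey:
  "finite S \<Longrightarrow> tournament_on S T \<Longrightarrow> card S \<ge> 2^l \<Longrightarrow> contains_TT S T l"
proof (induction l arbitrary: S)
  case 0
  show ?case unfolding contains_TT_def by (intro exI[of _ "\<lambda>_. undefined"]) simp
next
  case (Suc l)
  have "(0::nat) < 2^Suc l" by simp
  hence "card S > 0" using Suc.prems(3) by linarith
  hence "S \<noteq> {}" by auto
  then obtain v where v: "v \<in> S" by blast
  define Out where "Out = {u\<in>S. u \<noteq> v \<and> T v u}"
  define I where "I = {u\<in>S. u \<noteq> v \<and> T u v}"
  have tS: "\<And>x y. x \<in> S \<Longrightarrow> y \<in> S \<Longrightarrow> x \<noteq> y \<Longrightarrow> (T x y \<longleftrightarrow> \<not> T y x)"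
    using Suc.prems(2) unfolding tournament_on_def by blast
  have fin: "finite Out" "finite I" using Suc.prems(1) by (auto simp: Out_def I_def)
  have "S - {v} = Out \<union> I"
  proof
    show "S - {v} \<subseteq> Out \<union> I"
    proof
      fix u assume u: "u \<in> S - {v}"
      hence "T v u \<or> T u v" using tS[of u v] v by auto
      thus "u \<in> Out \<union> I" using u by (auto simp: Out_def I_def)
    qed
  qed (auto simp: Out_def I_def)
  moreover have "Out \<inter> I = {}"
  proof -
    have "u \<notin> I" if "u \<in> Out" for u
      using that tS[of v u] v by (auto simp: Out_def I_def)
    thus ?thesis by blast
  qed
  ultimately have "card (S - {v}) = card Out + card I" using fin card_Un_disjoint by simp
  moreover have "card (S - {v}) = card S - 1" using v Suc.prems(1) by simp
  moreover have "card S \<ge> 2 * 2^l" using Suc.prems(3) by simp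
  ultimately have "card Out \<ge> 2^l \<or> card I \<ge> 2^l" by linarith
  moreover have "tournament_on Out T" "tournament_on I T" using Suc.prems(2)
    unfolding tournament_on_def Out_def I_def by blast+
  ultimately show ?case
  proof (elim disjE conjE)
    assume "card Out \<ge> 2^l" "tournament_on Out T"
    hence "contains_TT Out T l" using Suc.IH fin by blast
    then obtain g where g: "inj_on g {1..l}" "g ` {1..l} \<subseteq> Out"
        "\<forall>i\<in>{1..l}. \<forall>j\<in>{1..l}. i < j \<longrightarrow> T (g i) (g j)"
      unfolding contains_TT_def by blast
    show ?thesis by (rule TT_extend_front[OF g v]) (auto simp: Out_def)
  next
    assume "card I \<ge> 2^l" "tournament_on I T"
    hence "contains_TT I T l" using Suc.IH fin by blast
    then obtain g where g: "inj_on g {1..l}" "g ` {1..l} \<subseteq> I"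
        "\<forall>i\<in>{1..l}. \<forall>j\<in>{1..l}. i < j \<longrightarrow> T (g i) (g j)"
      unfolding contains_TT_def by blast
    show ?thesis by (rule TT_extend_back[OF g v]) (auto simp: I_def)
  qed
qed

lemma dir_ramsey_prop:
  "\<forall>(S::nat set) T. finite S \<longrightarrow> card S \<ge> dir_ramsey l \<longrightarrow>
       tournament_on S T \<longrightarrow> contains_TT S T l"
proof -
  have "\<exists>N. \<forall>(S::nat set) T. finite S \<longrightarrow> card S \<ge> N \<longrightarrow>
       tournament_on S T \<longrightarrow> contains_TT S T l"
    using tourn_ramsey by blast
  thus ?thesis unfolding dir_ramsey_def by (rule LeastI_ex)
qed

theorem lemma5p1:
  fixes chi m :: nat
  assumes "chi \<ge> 2" and "m \<ge> 2"
  shows "\<exists>M0::nat. \<forall>M \<ge> M0. \<forall>(V::nat set) (col::nat set \<Rightarrow> bool) (P::nat \<Rightarrow> nat set).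
     finite V \<and> card V = dir_ramsey chi * M \<and>
     (\<forall>i\<in>{1..dir_ramsey chi}. P i \<subseteq> V \<and> card (P i) = M) \<and>
     (\<forall>i\<in>{1..dir_ramsey chi}. \<forall>j\<in>{1..dir_ramsey chi}. i \<noteq> j \<longrightarrow> P i \<inter> P j = {}) \<and>
     (\<Union>i\<in>{1..dir_ramsey chi}. P i) = V \<and>
     (\<forall>i\<in>{1..dir_ramsey chi}. \<forall>e. e \<subseteq> P i \<and> card e = 3 \<longrightarrow> col e)
     \<longrightarrow>
     ((\<forall>W::nat \<Rightarrow> nat set.
         (\<forall>i\<in>{1..dir_ramsey chi}. W i \<subseteq> P i \<and> 2 * card (W i) \<ge> M) \<longrightarrow>
         (\<exists>j\<in>{1..dir_ramsey chi}. \<exists>j'\<in>{1..dir_ramsey chi}. j \<noteq> j' \<and>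
            red_tight_path2 col (\<Union>i\<in>{1..dir_ramsey chi}. W i) (W j) (W j')))
      \<or> blue_H_TT V col chi m)"
proof -
  define R where "R = dir_ramsey chi"
  have Rp: "\<forall>(S::nat set) T. finite S \<longrightarrow> card S \<ge> R \<longrightarrow> tournament_on S T \<longrightarrow> contains_TT S T chi"
    unfolding R_def by (rule dir_ramsey_prop)
  define Q where "Q = {(i,j). i \<in> {1..R} \<and> j \<in> {1..R} \<and> i < j}"
  have fQ: "finite Q" by (rule finite_subset[of _ "{1..R} \<times> {1..R}"]) (auto simp: Q_def)
  have "Q \<subseteq> {(i,j). i \<in> {1..R} \<and> j \<in> {1..R} \<and> i \<noteq> j}" by (auto simp: Q_def)
  from multi_ramsey[OF fQ this] obtain N where N:
    "\<forall>(X::nat \<Rightarrow> nat set) (c::nat \<Rightarrow> nat \<Rightarrow> nat \<Rightarrow> nat \<Rightarrow> bool).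
     (\<forall>i\<in>{1..R}. finite (X i) \<and> card (X i) \<ge> N) \<longrightarrow>
     (\<exists>Y b. (\<forall>i\<in>{1..R}. Y i \<subseteq> X i \<and> card (Y i) = m) \<and>
         (\<forall>(i,j)\<in>Q. \<forall>x\<in>Y i. \<forall>y\<in>Y j. c i j x y = b i j))" by blast
  show ?thesis unfolding R_def[symmetric]
  proof (intro exI[of _ "2*N"] allI impI)
    fix M :: nat and V :: "nat set" and col :: "nat set \<Rightarrow> bool" and P :: "nat \<Rightarrow> nat set"
    assume M: "M \<ge> 2*N"
    assume H: "finite V \<and> card V = R * M \<and>
     (\<forall>i\<in>{1..R}. P i \<subseteq> V \<and> card (P i) = M) \<and>
     (\<forall>i\<in>{1..R}. \<forall>j\<in>{1..R}. i \<noteq> j \<longrightarrow> P i \<inter> P j = {}) \<and>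
     (\<Union>i\<in>{1..R}. P i) = V \<and>
     (\<forall>i\<in>{1..R}. \<forall>e. e \<subseteq> P i \<and> card e = 3 \<longrightarrow> col e)"
    have fV: "finite V" using H by blast
    have PV: "\<forall>i\<in>{1..R}. P i \<subseteq> V" using H by blast
    have disj: "\<forall>i\<in>{1..R}. \<forall>j\<in>{1..R}. i \<noteq> j \<longrightarrow> P i \<inter> P j = {}" using H by blast
    show "(\<forall>W::nat \<Rightarrow> nat set.
         (\<forall>i\<in>{1..R}. W i \<subseteq> P i \<and> 2 * card (W i) \<ge> M) \<longrightarrow>
         (\<exists>j\<in>{1..R}. \<exists>j'\<in>{1..R}. j \<noteq> j' \<and>
            red_tight_path2 col (\<Union>i\<in>{1..R}. W i) (W j) (W j')))
      \<or> blue_H_TT V col chi m"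
    proof (rule disj_commute[THEN iffD1], rule disjCI)
      assume "\<not> (\<forall>W::nat \<Rightarrow> nat set.
         (\<forall>i\<in>{1..R}. W i \<subseteq> P i \<and> 2 * card (W i) \<ge> M) \<longrightarrow>
         (\<exists>j\<in>{1..R}. \<exists>j'\<in>{1..R}. j \<noteq> j' \<and>
            red_tight_path2 col (\<Union>i\<in>{1..R}. W i) (W j) (W j')))"
      then obtain W where W: "\<forall>i\<in>{1..R}. W i \<subseteq> P i \<and> 2 * card (W i) \<ge> M"
        and nop: "\<forall>j\<in>{1..R}. \<forall>j'\<in>{1..R}. j \<noteq> j' \<longrightarrow>
            \<not> red_tight_path2 col (\<Union>i\<in>{1..R}. W i) (W j) (W j')" by blast
      have fW: "\<forall>i\<in>{1..R}. finite (W i)"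
      proof
        fix i assume "i \<in> {1..R}"
        hence "W i \<subseteq> V" using W PV by blast
        thus "finite (W i)" using fV by (rule finite_subset)
      qed
      have cW: "\<forall>i\<in>{1..R}. card (W i) \<ge> N"
      proof
        fix i assume "i \<in> {1..R}"
        hence "2 * card (W i) \<ge> M" using W by blast
        thus "card (W i) \<ge> N" using M by linarith
      qed
      define c where "c i j x y = (\<forall>x'\<in>W i. x' \<noteq> x \<longrightarrow> \<not> col {x, x', y})" for i j x y :: nat
      obtain Y b where Y: "\<forall>i\<in>{1..R}. Y i \<subseteq> W i \<and> card (Y i) = m"
        and Yb: "\<forall>(i,j)\<in>Q. \<forall>x\<in>Y i. \<forall>y\<in>Y j. c i j x y = b i j"
      proof -
        have "\<forall>i\<in>{1..R}. finite (W i) \<and> card (W i) \<ge> N" using fW cW by blast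
        from N[THEN spec[of _ W], THEN spec[of _ c], THEN mp, OF this] show ?thesis using that by blast
      qed
      define T where "T i j = (i \<in> {1..R} \<and> j \<in> {1..R} \<and> (if i < j then b i j else j < i \<and> \<not> b j i))" for i j
      have "tournament_on {1..R} T" unfolding tournament_on_def T_def by auto
      hence "contains_TT {1..R} T chi" using Rp by simp
      then obtain g where g: "inj_on g {1..chi}" "g ` {1..chi} \<subseteq> {1..R}"
          "\<forall>s\<in>{1..chi}. \<forall>t\<in>{1..chi}. s < t \<longrightarrow> T (g s) (g t)"
        unfolding contains_TT_def by blast
      have "\<forall>i\<in>{1..R}. \<exists>h. bij_betw h {1..m} (Y i)"
      proof
        fix i assume i: "i \<in> {1..R}"
        hence "finite (Y i)" using Y fW finite_subset by meson
        moreover have "card (Y i) = m" using Y i by blast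
        ultimately show "\<exists>h. bij_betw h {1..m} (Y i)" using ex_bij_betw_nat_finite_1 by metis
      qed
      from bchoice[OF this] obtain h where h: "\<forall>i\<in>{1..R}. bij_betw (h i) {1..m} (Y i)" by blast
      have key: "\<not> col {x, x', y}" if st: "s \<in> {1..chi}" "t \<in> {1..chi}" "s < t"
        and x: "x \<in> Y (g s)" and x': "x' \<in> Y (g s)" and xx: "x \<noteq> x'" and y: "y \<in> Y (g t)"
        for s t x x' y
      proof -
        define i where "i = g s"
        define j where "j = g t"
        have ij1: "i \<in> {1..R}" "j \<in> {1..R}" unfolding i_def j_def using g(2) st(1,2) by blast+
        have "i \<noteq> j"
        proof
          assume "i = j"
          hence "s = t" using inj_onD[OF g(1)] st(1,2) by (simp add: i_def j_def)
          thus False using st(3) by simp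
        qed
        note ij = ij1 this
        have Tij: "T i j" using g(3) st by (simp add: i_def j_def)
        show ?thesis
        proof (cases "i < j")
          case True
          hence "b i j" using Tij by (simp add: T_def)
          moreover have "(i, j) \<in> Q" using True ij by (auto simp: Q_def)
          ultimately have "c i j x y" using Yb x y by (auto simp: i_def j_def)
          moreover have "x' \<in> W i" using x' Y ij(1) unfolding i_def by blast
          ultimately show ?thesis using xx unfolding c_def by auto
        next
          case False
          hence ji: "j < i" using ij by auto
          hence "\<not> b j i" using Tij by (simp add: T_def)
          moreover have "(j, i) \<in> Q" using ji ij by (auto simp: Q_def)
          ultimately have "\<not> c j i y x" using Yb x y by (auto simp: i_def j_def)
          then obtain y' where y': "y' \<in> W j" "y' \<noteq> y" "col {y, y', x}" by (auto simp: c_def)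
          have xW: "x \<in> W i" "x' \<in> W i" using x x' Y ij by (auto simp: i_def)
          have yW: "y \<in> W j" using y Y ij by (auto simp: j_def)
          have dij: "W i \<inter> W j = {}" using disj W ij by blast
          have "\<not> red_tight_path2 col (\<Union>i\<in>{1..R}. W i) (W j) (W i)" using nop ij by auto
          moreover have "red_tight_path2 col (\<Union>i\<in>{1..R}. W i) (W j) (W i)"
            if "distinct [y', y, x, x'] \<and> {y', y, x, x'} \<subseteq> (\<Union>i\<in>{1..R}. W i) \<and>
             col {y', y, x} \<and> col {y, x, x'} \<and> {y', y} \<subseteq> W j \<and> {x, x'} \<subseteq> W i"
            unfolding red_tight_path2_def using that
            by (intro exI[of _ y'] exI[of _ y] exI[of _ x] exI[of _ x']) assumption
          ultimately have "\<not> (distinct [y', y, x, x'] \<and> {y', y, x, x'} \<subseteq> (\<Union>i\<in>{1..R}. W i) \<and>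
             col {y', y, x} \<and> col {y, x, x'} \<and> {y', y} \<subseteq> W j \<and> {x, x'} \<subseteq> W i)"
            by blast
          moreover have "distinct [y', y, x, x']" using y' xW yW dij xx by auto
          moreover have "{y', y, x, x'} \<subseteq> (\<Union>i\<in>{1..R}. W i)" using y' xW yW ij by auto
          moreover have "col {y', y, x}" using y'(3) by (simp add: insert_commute)
          ultimately have "\<not> col {y, x, x'}" using y' xW yW by auto
          thus ?thesis by (simp add: insert_commute)
        qed
      qed
      define f where "f p = h (g (fst p)) (snd p)" for p
      have hY: "s \<in> {1..chi} \<Longrightarrow> a \<in> {1..m} \<Longrightarrow> h (g s) a \<in> Y (g s)" for s a
        using h g(2) bij_betwE by blast
      have "inj_on f ({1..chi} \<times> {1..m})"
      proof (rule inj_onI, clarify)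
        fix s a t a' assume s: "s \<in> {1..chi}" "a \<in> {1..m}" and t: "t \<in> {1..chi}" "a' \<in> {1..m}"
          and e: "f (s, a) = f (t, a')"
        have gs: "g s \<in> {1..R}" "g t \<in> {1..R}" using g(2) s(1) t(1) by blast+
        show "s = t \<and> a = a'"
        proof (cases "g s = g t")
          case True
          hence st: "s = t" using inj_onD[OF g(1)] s t by blast
          have "inj_on (h (g s)) {1..m}" using h gs bij_betw_imp_inj_on by blast
          moreover have "h (g s) a = h (g s) a'" using e st by (simp add: f_def)
          ultimately have "a = a'" using inj_onD s t by metis
          thus ?thesis using st by simp
        next
          case False
          have "Y (g s) \<inter> Y (g t) = {}" using disj W Y gs False by blast
          thus ?thesis using hY[OF s] hY[OF t] e by (auto simp: f_def)
        qed
      qed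
      moreover have "f ` ({1..chi} \<times> {1..m}) \<subseteq> V"
      proof
        fix z assume "z \<in> f ` ({1..chi} \<times> {1..m})"
        then obtain s a where sa: "s \<in> {1..chi}" "a \<in> {1..m}" "z = f (s, a)" by blast
        have gs: "g s \<in> {1..R}" using g(2) sa(1) by blast
        have "Y (g s) \<subseteq> W (g s)" "W (g s) \<subseteq> P (g s)" "P (g s) \<subseteq> V"
          using Y W PV gs by blast+
        moreover have "z \<in> Y (g s)" using hY[OF sa(1,2)] sa(3) by (simp add: f_def)
        ultimately show "z \<in> V" by blast
      qed
      moreover have "\<forall>i\<in>{1..chi}. \<forall>j\<in>{1..chi}. \<forall>a\<in>{1..m}. \<forall>b\<in>{1..m}. \<forall>c\<in>{1..m}.
           i < j \<longrightarrow> a \<noteq> b \<longrightarrow> \<not> col {f (i, a), f (i, b), f (j, c)}"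
      proof (intro ballI impI)
        fix s t a a' c assume s: "s \<in> {1..chi}" "t \<in> {1..chi}" and a: "a \<in> {1..m}" "a' \<in> {1..m}" "c \<in> {1..m}"
          and st: "s < t" "a \<noteq> a'"
        have "g s \<in> {1..R}" using g(2) s(1) by blast
        hence "inj_on (h (g s)) {1..m}" using h bij_betw_imp_inj_on by blast
        hence "h (g s) a \<noteq> h (g s) a'" using inj_onD a st(2) by metis
        thus "\<not> col {f (s, a), f (s, a'), f (t, c)}"
          using key[OF s st(1) hY[OF s(1) a(1)] hY[OF s(1) a(2)] _ hY[OF s(2) a(3)]] by (simp add: f_def)
      qed
      ultimately show "blue_H_TT V col chi m" unfolding blue_H_TT_def
        by (intro exI[of _ f] conjI) assumption+
    qed
  qed
qed

end
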